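(* Let $V$ be a nonempty set, $E\subset V\times V$, $W\subset V$, $W^c=V\setminus W$. Then $$\Delta_{W^c}\big(\Delta\cup(B_W\cup K_W^{-1})C_W\big)(E_W^{-1})^*(E_W)^*\,C_W\,(E_W^{-1})^*(E_W)^*\big(\Delta\cup C_W(B_W^-\cup K_W^{-1})\big)\Delta_{W^c} =\Delta_{W^c}(B_W\cup K_W^{-1})\,C_W\,(B_W^-\cup K_W^{-1})\Delta_{W^c}.$$
   Context: Relations on $V$: composition $RR'$: $x(RR')y$ iff there is $z$ with $xRz$ and $zR'y$; $R^{-1}$ is the converse; $R^0=\Delta$, $R^{n+1}=RR^n$, $R^+=\bigcup_{k\ge1}R^k$, $R^*=\bigcup_{k\ge0}R^k$. For $S\subset V$, $\Delta_S=\{(x,x):x\in S\}$, $\Delta=\Delta_V$. Definitions: $E_W=\Delta_{W^c}E$; $B_W=E(E_W)^*$; $B_W^-=(B_W)^{-1}=(E_W^{-1})^*E^{-1}$; $K_W=B_W^-\Delta_{W^c}B_W$; $C_W=(\Delta_WK_W\Delta_W)^+\cup\Delta_W$. *)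

theory Defs
  imports Main
begin

text \<open>Relations on a carrier V are sets of pairs; composition R R' is R O R'.
  R^0 = Delta = Id_on V, so the reflexive-transitive closure is taken relative to V.\<close>

definition rstar :: "'a set \<Rightarrow> ('a \<times> 'a) set \<Rightarrow> ('a \<times> 'a) set" where
  "rstar V R = Id_on V \<union> trancl R"

definition EW :: "'a set \<Rightarrow> ('a \<times> 'a) set \<Rightarrow> 'a set \<Rightarrow> ('a \<times> 'a) set" where
  "EW V E W = Id_on (V - W) O E"

definition BW :: "'a set \<Rightarrow> ('a \<times> 'a) set \<Rightarrow> 'a set \<Rightarrow> ('a \<times> 'a) set" where
  "BW V E W = E O rstar V (EW V E W)"

definition BWm :: "'a set \<Rightarrow> ('a \<times> 'a) set \<Rightarrow> 'a set \<Rightarrow> ('a \<times> 'a) set" where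
  "BWm V E W = converse (BW V E W)"

definition KW :: "'a set \<Rightarrow> ('a \<times> 'a) set \<Rightarrow> 'a set \<Rightarrow> ('a \<times> 'a) set" where
  "KW V E W = BWm V E W O Id_on (V - W) O BW V E W"

definition CW :: "'a set \<Rightarrow> ('a \<times> 'a) set \<Rightarrow> 'a set \<Rightarrow> ('a \<times> 'a) set" where
  "CW V E W = trancl (Id_on W O KW V E W O Id_on W) \<union> Id_on W"

end

theory Submission
  imports Defs
begin

lemma rstar_conv: "converse (rstar V R) = rstar V (converse R)"
  by (simp add: rstar_def converse_Un trancl_converse)

lemma KW_sym: "converse (KW V E W) = KW V E W"
  by (simp add: KW_def BWm_def converse_relcomp O_assoc)

lemma EW_D: "(x,y) \<in> EW V E W \<Longrightarrow> x \<notin> W \<and> (x,y) \<in> E"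
  by (auto simp: EW_def)

lemma trancl_EW_fst: "(x,y) \<in> (EW V E W)\<^sup>+ \<Longrightarrow> x \<notin> W"
  by (erule converse_tranclE) (auto dest: EW_D)

lemma CW_sub: "CW V E W \<subseteq> W \<times> W"
proof -
  have "Id_on W O KW V E W O Id_on W \<subseteq> W \<times> W" by auto
  hence "trancl (Id_on W O KW V E W O Id_on W) \<subseteq> W \<times> W"
    by (rule trancl_subset_Sigma)
  thus ?thesis unfolding CW_def by auto
qed

lemma CW_trans: "(a,b) \<in> CW V E W \<Longrightarrow> (b,c) \<in> CW V E W \<Longrightarrow> (a,c) \<in> CW V E W"
  unfolding CW_def by (auto intro: trancl_trans)

lemma CW_refl: "a \<in> W \<Longrightarrow> (a,a) \<in> CW V E W"
  unfolding CW_def by auto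

lemma CW_K: "a \<in> W \<Longrightarrow> b \<in> W \<Longrightarrow> (a,b) \<in> KW V E W \<Longrightarrow> (a,b) \<in> CW V E W"
  unfolding CW_def by auto

lemma BW_sub: assumes "E \<subseteq> V \<times> V" shows "BW V E W \<subseteq> V \<times> V"
proof -
  have "EW V E W \<subseteq> V \<times> V" using assms unfolding EW_def by auto
  hence "(EW V E W)\<^sup>+ \<subseteq> V \<times> V" by (rule trancl_subset_Sigma)
  thus ?thesis using assms unfolding BW_def rstar_def by auto
qed

lemma KW_sub: assumes "E \<subseteq> V \<times> V" shows "converse (KW V E W) \<subseteq> V \<times> V"
  using BW_sub[OF assms, of W] unfolding KW_def BWm_def by auto

context
  fixes V W :: "'a set" and E :: "('a \<times> 'a) set"
  assumes EV: "E \<subseteq> V \<times> V"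
begin

lemma trancl_EW_B: "(x,y) \<in> (EW V E W)\<^sup>+ \<Longrightarrow> (x,y) \<in> BW V E W"
proof (erule converse_tranclE)
  assume "(x,y) \<in> EW V E W"
  then have "(x,y) \<in> E" by (auto dest: EW_D)
  with EV have "y \<in> V" by auto
  with \<open>(x,y) \<in> E\<close> show ?thesis unfolding BW_def rstar_def by auto
next
  fix z assume "(x,z) \<in> EW V E W" "(z,y) \<in> (EW V E W)\<^sup>+"
  then show ?thesis unfolding BW_def rstar_def by (auto dest: EW_D)
qed

lemma trancl_EW_V: "(x,y) \<in> (EW V E W)\<^sup>+ \<Longrightarrow> x \<in> V"
  by (erule converse_tranclE) (use EV in \<open>auto dest!: EW_D\<close>)

lemma K_char: "u \<notin> W \<Longrightarrow> (u,x) \<in> (EW V E W)\<^sup>+ \<Longrightarrow> (u,a) \<in> (EW V E W)\<^sup>+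
   \<Longrightarrow> (x,a) \<in> KW V E W"
proof -
  assume u: "u \<notin> W" and ux: "(u,x) \<in> (EW V E W)\<^sup>+" and ua: "(u,a) \<in> (EW V E W)\<^sup>+"
  have 1: "(x,u) \<in> BWm V E W" unfolding BWm_def using trancl_EW_B[OF ux] by simp
  have 2: "(u,u) \<in> Id_on (V - W)" using u trancl_EW_V[OF ux] by auto
  show ?thesis unfolding KW_def by (rule relcompI[OF 1 relcompI[OF 2 trancl_EW_B[OF ua]]])
qed

lemma S_case:
  assumes "(x,a) \<in> rstar V (converse (EW V E W)) O rstar V (EW V E W)" "a \<in> W"
  shows "x = a \<or> (x \<notin> W \<and> (x,a) \<in> BW V E W) \<or> (x,a) \<in> KW V E W"
proof -
  obtain z where xz: "(x,z) \<in> rstar V (converse (EW V E W))"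
    and za: "(z,a) \<in> rstar V (EW V E W)" using assms(1) by blast
  from xz have "x = z \<or> (z,x) \<in> (EW V E W)\<^sup>+"
    unfolding rstar_def by (auto simp: trancl_converse)
  then show ?thesis
  proof
    assume "x = z"
    from za have "z = a \<or> (z,a) \<in> (EW V E W)\<^sup>+" unfolding rstar_def by auto
    then show ?thesis
    proof
      assume "z = a" thus ?thesis using \<open>x = z\<close> by simp
    next
      assume za': "(z,a) \<in> (EW V E W)\<^sup>+"
      have "x \<notin> W \<and> (x,a) \<in> BW V E W"
        using trancl_EW_fst[OF za'] trancl_EW_B[OF za'] \<open>x = z\<close> by simp
      thus ?thesis by simp
    qed
  next
    assume zx: "(z,x) \<in> (EW V E W)\<^sup>+"
    hence "z \<notin> W" by (rule trancl_EW_fst)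
    with za assms(2) have "(z,a) \<in> (EW V E W)\<^sup>+" unfolding rstar_def by auto
    hence "(x,a) \<in> KW V E W" by (rule K_char[OF \<open>z \<notin> W\<close> zx])
    thus ?thesis by simp
  qed
qed

lemma S_sym: "(x,a) \<in> rstar V (converse (EW V E W)) O rstar V (EW V E W) \<Longrightarrow>
   (a,x) \<in> rstar V (converse (EW V E W)) O rstar V (EW V E W)"
proof -
  assume "(x,a) \<in> rstar V (converse (EW V E W)) O rstar V (EW V E W)"
  hence "(a,x) \<in> converse (rstar V (converse (EW V E W)) O rstar V (EW V E W))" by simp
  thus ?thesis by (simp add: converse_relcomp rstar_conv)
qed

end

theorem lemma4:
  fixes V W :: "'a set" and E :: "('a \<times> 'a) set"
  assumes "V \<noteq> {}" and "E \<subseteq> V \<times> V" and "W \<subseteq> V"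
  shows "Id_on (V - W) O (Id_on V \<union> (BW V E W \<union> converse (KW V E W)) O CW V E W)
           O rstar V (converse (EW V E W)) O rstar V (EW V E W) O CW V E W
           O rstar V (converse (EW V E W)) O rstar V (EW V E W)
           O (Id_on V \<union> CW V E W O (BWm V E W \<union> converse (KW V E W))) O Id_on (V - W)
       = Id_on (V - W) O (BW V E W \<union> converse (KW V E W)) O CW V E W
           O (BWm V E W \<union> converse (KW V E W)) O Id_on (V - W)"
proof -
  let ?B = "BW V E W" and ?K = "KW V E W" and ?C = "CW V E W"
    and ?S = "rstar V (converse (EW V E W)) O rstar V (EW V E W)"
    and ?Bm = "BWm V E W" and ?D = "Id_on (V - W)"
  note EV = assms(2)
  have Ks: "converse ?K = ?K" by (rule KW_sym)
  have G: "\<exists>m. (x,m) \<in> ?B \<union> converse ?K \<and> (m,q) \<in> ?C"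
    if x: "x \<notin> W" and xp: "(x,p) \<in> Id_on V \<union> (?B \<union> converse ?K) O ?C"
      and pq: "(p,q) \<in> ?S" and q: "q \<in> W" for x p q
  proof -
    from xp show ?thesis
    proof
      assume "(x,p) \<in> Id_on V"
      hence "x = p" by auto
      with S_case[OF EV pq q] x q Ks have "(x,q) \<in> ?B \<union> converse ?K" by auto
      with CW_refl[OF q] show ?thesis by blast
    next
      assume "(x,p) \<in> (?B \<union> converse ?K) O ?C"
      then obtain m where xm: "(x,m) \<in> ?B \<union> converse ?K" and mp: "(m,p) \<in> ?C" by blast
      from mp CW_sub have p: "p \<in> W" by blast
      have "(p,q) \<in> ?C"
      proof -
        from S_case[OF EV pq q] p have "p = q \<or> (p,q) \<in> ?K" by blast
        thus ?thesis using CW_refl[OF q] CW_K[OF p q] by blast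
      qed
      with mp have "(m,q) \<in> ?C" by (rule CW_trans)
      with xm show ?thesis by blast
    qed
  qed
  have G': "\<exists>m. (s,m) \<in> ?C \<and> (m,y) \<in> ?Bm \<union> converse ?K"
    if y: "y \<notin> W" and ty: "(t,y) \<in> Id_on V \<union> ?C O (?Bm \<union> converse ?K)"
      and st: "(s,t) \<in> ?S" and s: "s \<in> W" for y t s
  proof -
    have ts: "(t,s) \<in> ?S" by (rule S_sym[OF EV st])
    from ty show ?thesis
    proof
      assume "(t,y) \<in> Id_on V"
      hence "t = y" by auto
      with S_case[OF EV ts s] y s Ks have "(s,y) \<in> ?Bm \<union> converse ?K"
        unfolding BWm_def by auto
      with CW_refl[OF s] show ?thesis by blast
    next
      assume "(t,y) \<in> ?C O (?Bm \<union> converse ?K)"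
      then obtain m where tm: "(t,m) \<in> ?C" and my: "(m,y) \<in> ?Bm \<union> converse ?K" by blast
      from tm CW_sub have t: "t \<in> W" by blast
      have "(s,t) \<in> ?C"
      proof -
        from S_case[OF EV ts s] t have "t = s \<or> (t,s) \<in> ?K" by blast
        hence "s = t \<or> (s,t) \<in> ?K" using Ks by (metis converseI)
        thus ?thesis using CW_refl[OF s] CW_K[OF s t] by blast
      qed
      with tm have "(s,m) \<in> ?C" by (metis CW_trans)
      with my show ?thesis by blast
    qed
  qed
  let ?Sc = "rstar V (converse (EW V E W))" and ?Sr = "rstar V (EW V E W)"
  let ?X = "Id_on V \<union> (?B \<union> converse ?K) O ?C" and ?Y = "Id_on V \<union> ?C O (?Bm \<union> converse ?K)"
  show ?thesis
  proof (intro equalityI subrelI)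
    fix x y assume h: "(x,y) \<in> ?D O ?X O ?Sc O ?Sr O ?C O ?Sc O ?Sr O ?Y O ?D"
    obtain x' where h1: "(x,x') \<in> ?D" and h2: "(x',y) \<in> ?X O ?Sc O ?Sr O ?C O ?Sc O ?Sr O ?Y O ?D"
      using h by (rule relcompEpair)
    from h1 have x: "x \<notin> W" and xx: "x' = x" by auto
    obtain p where xp: "(x,p) \<in> ?X" and h3: "(p,y) \<in> ?Sc O ?Sr O ?C O ?Sc O ?Sr O ?Y O ?D"
      using h2 unfolding xx by (rule relcompEpair)
    obtain p1 where a1: "(p,p1) \<in> ?Sc" and h4: "(p1,y) \<in> ?Sr O ?C O ?Sc O ?Sr O ?Y O ?D"
      using h3 by (rule relcompEpair)
    obtain q where a2: "(p1,q) \<in> ?Sr" and h5: "(q,y) \<in> ?C O ?Sc O ?Sr O ?Y O ?D"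
      using h4 by (rule relcompEpair)
    obtain r where qr: "(q,r) \<in> ?C" and h6: "(r,y) \<in> ?Sc O ?Sr O ?Y O ?D"
      using h5 by (rule relcompEpair)
    obtain r1 where b1: "(r,r1) \<in> ?Sc" and h7: "(r1,y) \<in> ?Sr O ?Y O ?D"
      using h6 by (rule relcompEpair)
    obtain s where b2: "(r1,s) \<in> ?Sr" and h8: "(s,y) \<in> ?Y O ?D"
      using h7 by (rule relcompEpair)
    obtain y' where sy: "(s,y') \<in> ?Y" and h9: "(y',y) \<in> ?D"
      using h8 by (rule relcompEpair)
    from h9 have y: "y \<notin> W" and yy: "y' = y" by auto
    have pq: "(p,q) \<in> ?S" using a1 a2 by (rule relcompI)
    have rs: "(r,s) \<in> ?S" using b1 b2 by (rule relcompI)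
    from sy yy have sy: "(s,y) \<in> ?Y" by simp
    from qr CW_sub have q: "q \<in> W" and r: "r \<in> W" by auto
    obtain m1 where 1: "(x,m1) \<in> ?B \<union> converse ?K" "(m1,q) \<in> ?C" using G[OF x xp pq q] by blast
    obtain m2 where 2: "(r,m2) \<in> ?C" "(m2,y) \<in> ?Bm \<union> converse ?K" using G'[OF y sy rs r] by blast
    have mm: "(m1,m2) \<in> ?C" using CW_trans[OF CW_trans[OF 1(2) qr] 2(1)] .
    have xV: "x \<in> V" using 1(1) BW_sub[OF EV, of W] KW_sub[OF EV, of W] by blast
    have yV: "y \<in> V" using 2(2) BW_sub[OF EV, of W] KW_sub[OF EV, of W] unfolding BWm_def by blast
    have dx: "(x,x) \<in> ?D" using xV x by auto
    have dy: "(y,y) \<in> ?D" using yV y by auto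
    show "(x,y) \<in> ?D O (?B \<union> converse ?K) O ?C O (?Bm \<union> converse ?K) O ?D"
      by (rule relcompI[OF dx relcompI[OF 1(1) relcompI[OF mm relcompI[OF 2(2) dy]]]])
  next
    fix x y assume h: "(x,y) \<in> ?D O (?B \<union> converse ?K) O ?C O (?Bm \<union> converse ?K) O ?D"
    obtain x' where h1: "(x,x') \<in> ?D" and h2: "(x',y) \<in> (?B \<union> converse ?K) O ?C O (?Bm \<union> converse ?K) O ?D"
      using h by (rule relcompEpair)
    from h1 have dx: "(x,x) \<in> ?D" and xx: "x' = x" by auto
    obtain m where xm: "(x,m) \<in> ?B \<union> converse ?K" and h3: "(m,y) \<in> ?C O (?Bm \<union> converse ?K) O ?D"
      using h2 unfolding xx by (rule relcompEpair)
    obtain n where mn: "(m,n) \<in> ?C" and h4: "(n,y) \<in> (?Bm \<union> converse ?K) O ?D"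
      using h3 by (rule relcompEpair)
    obtain y' where ny: "(n,y') \<in> ?Bm \<union> converse ?K" and h5: "(y',y) \<in> ?D"
      using h4 by (rule relcompEpair)
    from h5 have dy: "(y,y) \<in> ?D" and yy: "y' = y" by auto
    from ny yy have ny: "(n,y) \<in> ?Bm \<union> converse ?K" by simp
    from mn CW_sub[of V E W] have nW: "n \<in> W" by blast
    with assms(3) have nV: "n \<in> V" by auto
    have n1: "(n,n) \<in> ?Sc" and n2: "(n,n) \<in> ?Sr" using nV unfolding rstar_def by auto
    have nC: "(n,n) \<in> ?C" by (rule CW_refl[OF nW])
    have xn: "(x,n) \<in> ?X" using xm mn by blast
    have ny': "(n,y) \<in> ?Y" using ny nC by blast
    show "(x,y) \<in> ?D O ?X O ?Sc O ?Sr O ?C O ?Sc O ?Sr O ?Y O ?D"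
      by (rule relcompI[OF dx relcompI[OF xn relcompI[OF n1 relcompI[OF n2 relcompI[OF nC
          relcompI[OF n1 relcompI[OF n2 relcompI[OF ny' dy]]]]]]]])
  qed
qed

end
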